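(* Let $\mathcal{E}$ be a set of entities and $\mathcal{R}$ a set of relations, and let a triple be an element of $\mathcal{E}\times\mathcal{R}\times\mathcal{E}$. Fix a test set $\mathcal{T}_{test}$ of triples and an evaluation assumption WA $\in\{\text{CWA},\text{RS-POWA}\}$, which determines a set $N_{WA}$ of triples disjoint from $\mathcal{T}_{test}$ (described in the context). Let $\mathcal{T}^1_{predict}$ be a finite set of predicted triples, each carrying a real score, and let $\mathcal{T}^2_{predict}=\mathcal{T}^1_{predict}\cup\{(h,r,t)\}$, where $(h,r,t)\notin\mathcal{T}^1_{predict}$ is a triple with a score and the triples of $\mathcal{T}^1_{predict}$ keep their scores. If $(h,r,t)\in\mathcal{T}_{test}$ (i.e. $(h,r,t)$ is in the positive set $\mathcal{T}^{WA+}_{predict}=\mathcal{T}^2_{predict}\cap\mathcal{T}_{test}$), then $RS^2_{TSP}>RS^1_{TSP}$, where $RS^k_{TSP}$ denotes the ranking score of $\mathcal{T}^k_{predict}$.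
   Context: Ranking score: given a finite predicted set $\mathcal{T}_{predict}$ with scores, sort it in descending order of score (with a fixed tie-breaking, consistent when a triple is added, so that the relative order of the original triples is unchanged) to obtain the list $tri_1,tri_2,\dots$ with positions $i\ge 1$. Define $\mathcal{T}^{WA+}_{predict}=\mathcal{T}_{predict}\cap\mathcal{T}_{test}$, $\mathcal{T}^{WA-}_{predict}=\mathcal{T}_{predict}\cap N_{WA}$, $\mathcal{T}^{WA}_{predict}=\mathcal{T}^{WA+}_{predict}\cup\mathcal{T}^{WA-}_{predict}$. Set $rs_{tri_i}=1/i$ if $tri_i\in\mathcal{T}^{WA+}_{predict}$ and $rs_{tri_i}=-1/i$ if $tri_i\in\mathcal{T}^{WA-}_{predict}$, and $RS_{TSP}=\sum_{tri_i\in\mathcal{T}^{WA}_{predict}} rs_{tri_i}$ (triples in neither set occupy positions but contribute nothing). Under the closed-world assumption (CWA), $N_{CWA}$ is the set of all triples not in $\mathcal{T}_{test}$. Under the relation-similarity partial-open-world assumption (RS-POWA), given a known triple set $\mathcal{T}$ (training triples) and a similarity $sim(r,r')=\max\big(|P_r\cap P_{r'}|/|P_r|,\ |P_r\cap P_{r'}|/|P_{r'}|\big)$, where $P_r$ is the set of entity pairs linked by $r$ in the training and test triples, and threshold $\theta$ (e.g. $0.8$), $N_{RS\text{-}POWA}$ is the set of triples $(h,r,t)\notin\mathcal{T}_{test}$ for which some relation $r'\neq r$ with $(h,r',t)$ a known triple satisfies $sim(r,r')<\theta$. *)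

theory Defs
  imports Complex_Main
begin

type_synonym ('e, 'r) triple = "'e \<times> 'r \<times> 'e"

datatype wa = CWA | RS_POWA

definition N_CWA :: "('e,'r) triple set \<Rightarrow> ('e,'r) triple set" where
  "N_CWA T_test = - T_test"

definition pairs_of :: "('e,'r) triple set \<Rightarrow> ('e,'r) triple set \<Rightarrow> 'r \<Rightarrow> ('e \<times> 'e) set" where
  "pairs_of T_train T_test r = {(h, t). (h, r, t) \<in> T_train \<union> T_test}"

definition rel_sim :: "('e,'r) triple set \<Rightarrow> ('e,'r) triple set \<Rightarrow> 'r \<Rightarrow> 'r \<Rightarrow> real" where
  "rel_sim T_train T_test r r' =
     (let P = pairs_of T_train T_test r; P' = pairs_of T_train T_test r'
      in max (real (card (P \<inter> P')) / real (card P)) (real (card (P \<inter> P')) / real (card P')))"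

text \<open>RS-POWA negatives; the known triples are the training triples.\<close>
definition N_RS_POWA :: "('e,'r) triple set \<Rightarrow> ('e,'r) triple set \<Rightarrow> real \<Rightarrow> ('e,'r) triple set" where
  "N_RS_POWA T_test T_train \<theta> =
     {(h, r, t). (h, r, t) \<notin> T_test \<and>
        (\<exists>r'. r' \<noteq> r \<and> (h, r', t) \<in> T_train \<and> rel_sim T_train T_test r r' < \<theta>)}"

definition N_WA :: "wa \<Rightarrow> ('e,'r) triple set \<Rightarrow> ('e,'r) triple set \<Rightarrow> real \<Rightarrow> ('e,'r) triple set" where
  "N_WA w T_test T_train \<theta> = (case w of CWA \<Rightarrow> N_CWA T_test | RS_POWA \<Rightarrow> N_RS_POWA T_test T_train \<theta>)"

definition ranked_before :: "('a \<Rightarrow> real) \<Rightarrow> 'a rel \<Rightarrow> 'a \<Rightarrow> 'a \<Rightarrow> bool" where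
  "ranked_before score tb y x \<longleftrightarrow> score y > score x \<or> (score y = score x \<and> (y, x) \<in> tb)"

definition rank_pos :: "('a \<Rightarrow> real) \<Rightarrow> 'a rel \<Rightarrow> 'a set \<Rightarrow> 'a \<Rightarrow> nat" where
  "rank_pos score tb S x = card {y \<in> S. ranked_before score tb y x} + 1"

definition RS_TSP :: "('a \<Rightarrow> real) \<Rightarrow> 'a rel \<Rightarrow> 'a set \<Rightarrow> 'a set \<Rightarrow> 'a set \<Rightarrow> real" where
  "RS_TSP score tb Tpos Nneg S =
     (\<Sum>x \<in> S \<inter> Tpos. 1 / real (rank_pos score tb S x))
     + (\<Sum>x \<in> S \<inter> Nneg. - 1 / real (rank_pos score tb S x))"

end

theory Submission
  imports Defs
begin

lemma rb_irrefl:
  assumes "strict_linear_order tb" shows "\<not> ranked_before score tb y y"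
  using assms unfolding ranked_before_def strict_linear_order_on_def irrefl_def by auto

lemma rb_trans:
  assumes "strict_linear_order tb" "ranked_before score tb a b" "ranked_before score tb b c"
  shows "ranked_before score tb a c"
proof -
  have "trans tb" using assms(1) unfolding strict_linear_order_on_def by auto
  then show ?thesis using assms(2,3) unfolding ranked_before_def
    by (smt (verit) transD)
qed

lemma rb_total:
  assumes "strict_linear_order tb" "a \<noteq> b"
  shows "ranked_before score tb a b \<or> ranked_before score tb b a"
proof -
  have "total_on UNIV tb" using assms(1) unfolding strict_linear_order_on_def by auto
  then have "(a,b) \<in> tb \<or> (b,a) \<in> tb" using assms(2) unfolding total_on_def by auto
  then show ?thesis unfolding ranked_before_def by auto
qed

lemma rank_insert:
  assumes "finite S" "x \<notin> S" "y \<in> S"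
  shows "rank_pos score tb (insert x S) y =
           rank_pos score tb S y + (if ranked_before score tb x y then 1 else 0)"
proof -
  have "{z \<in> insert x S. ranked_before score tb z y} =
        (if ranked_before score tb x y then insert x {z \<in> S. ranked_before score tb z y}
         else {z \<in> S. ranked_before score tb z y})" by auto
  then show ?thesis unfolding rank_pos_def using assms by auto
qed

lemma rank_self:
  assumes "strict_linear_order tb"
  shows "rank_pos score tb (insert x S) x = rank_pos score tb S x"
  unfolding rank_pos_def using rb_irrefl[OF assms] by (metis insert_iff mem_Collect_eq)

lemma rank_mono:
  assumes "strict_linear_order tb" "finite S" "ranked_before score tb x y"
  shows "rank_pos score tb S x \<le> rank_pos score tb S y"
proof -
  have "{z \<in> S. ranked_before score tb z x} \<subseteq> {z \<in> S. ranked_before score tb z y}"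
    using rb_trans[OF assms(1) _ assms(3)] by auto
  then show ?thesis unfolding rank_pos_def using assms(2) by (simp add: card_mono)
qed

lemma rank_inj:
  assumes "strict_linear_order tb" "finite S"
  shows "inj_on (rank_pos score tb S) S"
proof (rule inj_onI, rule ccontr)
  fix a b assume a: "a \<in> S" and b: "b \<in> S" and eq: "rank_pos score tb S a = rank_pos score tb S b"
    and ne: "a \<noteq> b"
  have strict: "rank_pos score tb S u < rank_pos score tb S v"
    if u: "u \<in> S" and uv: "ranked_before score tb u v" for u v
  proof -
    have "{z \<in> S. ranked_before score tb z u} \<subset> {z \<in> S. ranked_before score tb z v}"
      using rb_trans[OF assms(1) _ uv] rb_irrefl[OF assms(1)] u uv by auto
    then show ?thesis unfolding rank_pos_def using assms(2) by (simp add: psubset_card_mono)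
  qed
  have "ranked_before score tb a b \<or> ranked_before score tb b a" using rb_total[OF assms(1) ne] .
  then show False
  proof
    assume "ranked_before score tb a b" then show False using strict[OF a] eq by force
  next
    assume "ranked_before score tb b a" then show False using strict[OF b] eq by force
  qed
qed

lemma rank_le_card:
  assumes "finite S" "y \<in> S" "strict_linear_order tb"
  shows "rank_pos score tb S y \<le> card S"
proof -
  have "{z \<in> S. ranked_before score tb z y} \<subseteq> S - {y}" using rb_irrefl[OF assms(3)] by auto
  then have "card {z \<in> S. ranked_before score tb z y} \<le> card S - 1"
    using assms by (metis card_Diff_singleton card_mono finite_Diff)
  moreover have "card S \<ge> 1" using assms by (metis One_nat_def Suc_leI card_gt_0_iff empty_iff)
  ultimately show ?thesis unfolding rank_pos_def by simp
qed

lemma telescope: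
  assumes "p \<ge> (1::nat)"
  shows "(\<Sum>k\<in>{p..<p+m}. 1 / real k - 1 / real (k+1)) = 1 / real p - 1 / real (p+m)"
  by (induction m) (auto simp: algebra_simps)

theorem theorem1:
  fixes T_test T_train T1 :: "('e, 'r) triple set"
    and \<theta> :: real and w :: wa
    and score :: "('e, 'r) triple \<Rightarrow> real"
    and tb :: "('e, 'r) triple rel"
    and h t :: 'e and r :: 'r
  assumes "strict_linear_order tb"
    and "finite T1"
    and "(h, r, t) \<notin> T1"
    and "(h, r, t) \<in> T_test"
  shows "RS_TSP score tb T_test (N_WA w T_test T_train \<theta>) (insert (h, r, t) T1)
           > RS_TSP score tb T_test (N_WA w T_test T_train \<theta>) T1"
proof -
  define x where "x = (h, r, t)"
  define N where "N = N_WA w T_test T_train \<theta>"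
  define S where "S = T1"
  define P where "P = T_test"
  define q where "q = rank_pos score tb S"
  define q' where "q' = rank_pos score tb (insert x S)"
  define rb where "rb = ranked_before score tb"
  note slo = assms(1)
  have fin: "finite S" and xS: "x \<notin> S" and xP: "x \<in> P"
    using assms unfolding x_def S_def P_def by auto
  have disj: "N \<inter> P = {}" unfolding N_def P_def N_WA_def N_CWA_def N_RS_POWA_def
    by (cases w) auto
  have xN: "x \<notin> N" using disj xP by auto
  define c where "c = (\<lambda>f y. (if y \<in> P then 1 / real (f y) else 0)
                            + (if y \<in> N then - (1 / real (f y)) else 0))"
  have RS_eq: "RS_TSP score tb P N A = (\<Sum>y\<in>A. c (rank_pos score tb A) y)" if "finite A" for A
    unfolding RS_TSP_def c_def using that
    by (simp add: sum.inter_restrict sum.distrib)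
  define p where "p = q x"
  have p1: "p \<ge> 1" unfolding p_def q_def rank_pos_def by simp
  have q'x: "q' x = p" unfolding q'_def p_def q_def using rank_self[OF slo] by simp
  have q1: "q y \<ge> 1" for y unfolding q_def rank_pos_def by simp
  have q'y: "q' y = q y + (if rb x y then 1 else 0)" if "y \<in> S" for y
    unfolding q'_def q_def rb_def using rank_insert[OF fin xS that] by simp
  define g where "g = (\<lambda>k::nat. 1 / real k - 1 / real (k+1))"
  define A where "A = {y \<in> S. rb x y}"
  have termle: "c q' y - c q y \<ge> - (if rb x y then g (q y) else 0)" if "y \<in> S" for y
  proof (cases "rb x y")
    case True
    have qq: "q' y = q y + 1" using q'y[OF that] True by simp
    have "real (q y) \<ge> 1" using q1[of y] by simp
    then have g0: "g (q y) \<ge> 0" unfolding g_def by (simp add: frac_le)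
    show ?thesis using True g0 unfolding c_def qq g_def by (auto simp: algebra_simps)
  next
    case False
    then show ?thesis using q'y[OF that] unfolding c_def by simp
  qed
  have sumA: "(\<Sum>y\<in>S. (if rb x y then g (q y) else 0)) = (\<Sum>y\<in>A. g (q y))"
    unfolding A_def using fin by (simp add: sum.inter_filter[symmetric] sum.If_cases)
  have injA: "inj_on q A" using rank_inj[OF slo fin] unfolding q_def A_def
    by (rule inj_on_subset) auto
  have reidx: "(\<Sum>y\<in>A. g (q y)) = (\<Sum>k\<in>q ` A. g k)"
    using sum.reindex[OF injA, of g] by simp
  have sub: "q ` A \<subseteq> {p..<p + card S}"
  proof
    fix k assume "k \<in> q ` A"
    then obtain y where y: "y \<in> S" "rb x y" "k = q y" unfolding A_def by auto
    have "p \<le> q y" unfolding p_def q_def using rank_mono[OF slo fin] y(2) rb_def by simp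
    moreover have "q y \<le> card S" unfolding q_def using rank_le_card[OF fin y(1) slo] .
    ultimately show "k \<in> {p..<p + card S}" using y(3) p1 by auto
  qed
  have gnn: "g k \<ge> 0" if "k \<in> {p..<p + card S}" for k
  proof -
    have "real k \<ge> 1" using that p1 by auto
    then show ?thesis unfolding g_def by (simp add: frac_le)
  qed
  have "(\<Sum>k\<in>q ` A. g k) \<le> (\<Sum>k\<in>{p..<p + card S}. g k)"
    by (rule sum_mono2[OF _ sub]) (use gnn in auto)
  also have "\<dots> = 1 / real p - 1 / real (p + card S)" unfolding g_def using telescope[OF p1] .
  also have "\<dots> < 1 / real p" using p1 by simp
  finally have loss: "(\<Sum>y\<in>S. (if rb x y then g (q y) else 0)) < 1 / real p"
    using sumA reidx by simp
  have "(\<Sum>y\<in>S. c q' y - c q y) \<ge> (\<Sum>y\<in>S. - (if rb x y then g (q y) else 0))"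
    by (rule sum_mono) (use termle in auto)
  then have diff: "(\<Sum>y\<in>S. c q' y) - (\<Sum>y\<in>S. c q y) > - 1 / real p"
    using loss by (simp add: sum_subtractf sum_negf)
  have cx: "c q' x = 1 / real p" unfolding c_def using xP xN q'x by simp
  have "RS_TSP score tb P N (insert x S) = c q' x + (\<Sum>y\<in>S. c q' y)"
    using RS_eq[of "insert x S"] fin xS unfolding q'_def by simp
  moreover have "RS_TSP score tb P N S = (\<Sum>y\<in>S. c q y)"
    using RS_eq[OF fin] unfolding q_def by simp
  ultimately have "RS_TSP score tb P N (insert x S) > RS_TSP score tb P N S"
    using diff cx by simp
  then show ?thesis unfolding x_def S_def P_def N_def .
qed

end
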